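(* Let $m\in\mathbb N$. Suppose $a>0$ is such that for every $u\in H^1(\mathbb B^2)$ with $\int_{\mathbb S^1}e^u\,p\,d\mu_{\mathbb S^1}=0$ for all $p\in\mathring{\mathcal P}_m$, $$a\int_{\mathbb B^2}|\nabla u|^2dx\ge\log\Big(\frac1{2\pi}\int_{\mathbb S^1}e^{u-\bar u}d\mu_{\mathbb S^1}\Big),\qquad\bar u=\frac1{2\pi}\int_{\mathbb S^1}u\,d\mu_{\mathbb S^1}.$$ Then $a\ge\frac{1}{4\pi(m+1)}$.
   Context: $\mathbb B^2$ is the open unit disk, $\mathbb S^1$ its boundary with arclength measure $\mu_{\mathbb S^1}$; $u$ on $\mathbb S^1$ denotes the trace. $\mathcal P_m$ denotes the polynomials on $\mathbb R^2$ of degree at most $m$, and $\mathring{\mathcal P}_m=\{p\in\mathcal P_m:\int_{\mathbb S^1}p\,d\mu_{\mathbb S^1}=0\}$. *)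

theory Defs
  imports "HOL-Analysis.Analysis"
begin

text \<open>The plane R^2 is identified with the complex numbers (x,y) = x + i y.
  The arclength measure on the unit circle S^1 is the image of Lebesgue
  measure on [0, 2 pi] under t maps to cis t.\<close>

definition S1_measure :: "complex measure" where
  "S1_measure = distr (lebesgue_on {0..2*pi}) borel cis"

definition S1_mean :: "(complex \<Rightarrow> real) \<Rightarrow> real" where
  "S1_mean f = (1 / (2*pi)) * (\<integral>z. f z \<partial>S1_measure)"

definition poly2 :: "nat \<Rightarrow> (nat \<Rightarrow> nat \<Rightarrow> real) \<Rightarrow> complex \<Rightarrow> real" where
  "poly2 m c z = (\<Sum>i\<le>m. \<Sum>j\<le>m - i. c i j * Re z ^ i * Im z ^ j)"

text \<open>H1_with_trace u G f: u belongs to H^1 of the unit disk, G is its (weak)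
  gradient and f is its trace on S^1.  H^1 is the completion of functions C^1 up to
  the boundary under the H^1 norm; the trace is the continuous extension of
  restriction to S^1 into L^2(S^1).\<close>

definition H1_with_trace ::
  "(complex \<Rightarrow> real) \<Rightarrow> (complex \<Rightarrow> complex) \<Rightarrow> (complex \<Rightarrow> real) \<Rightarrow> bool" where
  "H1_with_trace u G f \<longleftrightarrow>
     u \<in> borel_measurable lebesgue \<and> G \<in> borel_measurable lebesgue \<and> f \<in> borel_measurable borel \<and>
     (\<exists>\<phi> G\<phi>. (\<forall>n. \<exists>S. open S \<and> cball 0 1 \<subseteq> S \<and> continuous_on S (G\<phi> n) \<and>
                       (\<forall>x\<in>S. (\<phi> n has_derivative (\<lambda>h. G\<phi> n x \<bullet> h)) (at x))) \<and>
        (\<lambda>n. \<integral>\<^sup>+x. ennreal ((\<phi> n x - u x)\<^sup>2) \<partial>(lebesgue_on (ball 0 1))) \<longlonglongrightarrow> 0 \<and>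
        (\<lambda>n. \<integral>\<^sup>+x. ennreal ((norm (G\<phi> n x - G x))\<^sup>2) \<partial>(lebesgue_on (ball 0 1))) \<longlonglongrightarrow> 0 \<and>
        (\<lambda>n. \<integral>\<^sup>+z. ennreal ((\<phi> n z - f z)\<^sup>2) \<partial>S1_measure) \<longlonglongrightarrow> 0)"

end

theory Submission
  imports Defs
begin


definition Mp :: "nat \<Rightarrow> (complex \<Rightarrow> complex) \<Rightarrow> bool" where
  "Mp n g \<longleftrightarrow> (\<exists>d. \<forall>z. g z = (\<Sum>a\<le>n. \<Sum>b\<le>n-a. d a b * z^a * cnj z^b))"

lemma Mp_const: "Mp n (\<lambda>_. c)"
proof -
  have "(\<Sum>a\<le>n. \<Sum>b\<le>n-a. (if a = 0 \<and> b = 0 then c else 0) * z^a * cnj z^b) = c" for z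
  proof -
    have "(\<Sum>a\<le>n. \<Sum>b\<le>n-a. (if a = 0 \<and> b = 0 then c else 0) * z^a * cnj z^b)
        = (\<Sum>a\<le>n. if a = 0 then c else 0)"
      proof (intro sum.cong refl)
      fix a assume "a \<in> {..n}"
      show "(\<Sum>b\<le>n-a. (if a = 0 \<and> b = 0 then c else 0) * z^a * cnj z^b) = (if a = 0 then c else 0)"
        by (cases "a = 0") (simp_all add: if_distrib[of "\<lambda>x. x * _"] cong: if_cong)
    qed
    also have "\<dots> = c" by simp
    finally show ?thesis .
  qed
  then show ?thesis unfolding Mp_def by (intro exI[of _ "\<lambda>a b. if a = 0 \<and> b = 0 then c else 0"]) auto
qed

lemma Mp_add: "Mp n f \<Longrightarrow> Mp n g \<Longrightarrow> Mp n (\<lambda>z. f z + g z)"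
  unfolding Mp_def
  apply (elim exE)
  subgoal for d e
    by (rule exI[of _ "\<lambda>a b. d a b + e a b"]) (simp add: sum.distrib distrib_right)
  done

lemma Mp_scale: "Mp n f \<Longrightarrow> Mp n (\<lambda>z. c * f z)"
  unfolding Mp_def
  apply (elim exE)
  subgoal for d
    by (rule exI[of _ "\<lambda>a b. c * d a b"]) (simp add: sum_distrib_left mult.assoc)
  done

lemma Mp_zero: "Mp n (\<lambda>_. 0)"
  using Mp_const[of n 0] .

lemma Mp_sum: "finite S \<Longrightarrow> (\<And>i. i \<in> S \<Longrightarrow> Mp n (f i)) \<Longrightarrow> Mp n (\<lambda>z. \<Sum>i\<in>S. f i z)"
  by (induction S rule: finite_induct) (auto intro: Mp_add Mp_zero)

lemma Mp_z: assumes "Mp n g" shows "Mp (Suc n) (\<lambda>z. z * g z)"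
proof -
  from assms obtain d where d: "\<And>z. g z = (\<Sum>a\<le>n. \<Sum>b\<le>n-a. d a b * z^a * cnj z^b)"
    unfolding Mp_def by blast
  define e where "e a b = (case a of 0 \<Rightarrow> 0 | Suc a' \<Rightarrow> d a' b)" for a b
  have "z * g z = (\<Sum>a\<le>Suc n. \<Sum>b\<le>Suc n-a. e a b * z^a * cnj z^b)" for z
  proof -
    have "(\<Sum>a\<le>Suc n. \<Sum>b\<le>Suc n-a. e a b * z^a * cnj z^b)
        = (\<Sum>a\<le>n. \<Sum>b\<le>Suc n-Suc a. e (Suc a) b * z^Suc a * cnj z^b)"
      by (subst sum.atMost_Suc_shift) (simp add: e_def)
    also have "\<dots> = (\<Sum>a\<le>n. \<Sum>b\<le>n-a. z * (d a b * z^a * cnj z^b))"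
      by (simp add: e_def mult_ac)
    also have "\<dots> = z * g z" by (simp add: d sum_distrib_left)
    finally show ?thesis by simp
  qed
  then show ?thesis unfolding Mp_def by blast
qed

lemma Mp_cnj: assumes "Mp n g" shows "Mp (Suc n) (\<lambda>z. cnj z * g z)"
proof -
  from assms obtain d where d: "\<And>z. g z = (\<Sum>a\<le>n. \<Sum>b\<le>n-a. d a b * z^a * cnj z^b)"
    unfolding Mp_def by blast
  define e where "e a b = (case b of 0 \<Rightarrow> 0 | Suc b' \<Rightarrow> (if a \<le> n then d a b' else 0))" for a b
  have "cnj z * g z = (\<Sum>a\<le>Suc n. \<Sum>b\<le>Suc n-a. e a b * z^a * cnj z^b)" for z
  proof -
    have "(\<Sum>a\<le>Suc n. \<Sum>b\<le>Suc n-a. e a b * z^a * cnj z^b)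
        = (\<Sum>a\<le>n. \<Sum>b\<le>Suc n-a. e a b * z^a * cnj z^b)"
      by (simp add: e_def)
    also have "\<dots> = (\<Sum>a\<le>n. \<Sum>b\<le>Suc (n-a). e a b * z^a * cnj z^b)"
      by (intro sum.cong refl) (simp add: Suc_diff_le)
    also have "\<dots> = (\<Sum>a\<le>n. \<Sum>b\<le>n-a. cnj z * (d a b * z^a * cnj z^b))"
      by (rule sum.cong[OF refl], subst sum.atMost_Suc_shift) (simp add: e_def mult_ac)
    also have "\<dots> = cnj z * g z" by (simp add: d sum_distrib_left)
    finally show ?thesis by simp
  qed
  then show ?thesis unfolding Mp_def by blast
qed

lemma Mp_Re: assumes "Mp n g" shows "Mp (Suc n) (\<lambda>z. of_real (Re z) * g z)"
proof -
  have "Mp (Suc n) (\<lambda>z. (1/2) * (z * g z + cnj z * g z))"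
    by (intro Mp_scale Mp_add Mp_z Mp_cnj assms)
  moreover have "(1/2) * (z * g z + cnj z * g z) = of_real (Re z) * g z" for z
  proof -
    have "z * g z + cnj z * g z = (z + cnj z) * g z" by (simp add: distrib_right)
    then show ?thesis by (simp add: complex_add_cnj)
  qed
  ultimately show ?thesis by simp
qed

lemma Mp_Im: assumes "Mp n g" shows "Mp (Suc n) (\<lambda>z. of_real (Im z) * g z)"
proof -
  have "Mp (Suc n) (\<lambda>z. (1/(2*\<i>)) * (z * g z + (-1) * (cnj z * g z)))"
    by (intro Mp_scale Mp_add Mp_z Mp_cnj assms)
  moreover have "(1/(2*\<i>)) * (z * g z + (-1) * (cnj z * g z)) = of_real (Im z) * g z" for z
  proof -
    have "z * g z + (-1) * (cnj z * g z) = (z - cnj z) * g z" by (simp add: algebra_simps)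
    then show ?thesis by (simp add: complex_diff_cnj) (metis complex_i_mult_minus mult.left_commute minus_minus)
  qed
  ultimately show ?thesis by simp
qed

lemma Mp_ReIm: "Mp k g \<Longrightarrow> Mp (k + i + j) (\<lambda>z. of_real (Re z ^ i * Im z ^ j) * g z)"
proof (induction i)
  case 0
  then show ?case
  proof (induction j)
    case 0 then show ?case by simp
  next
    case (Suc j)
    have "Mp (Suc (k + 0 + j)) (\<lambda>z. of_real (Im z) * (of_real (Re z ^ 0 * Im z ^ j) * g z))"
      by (intro Mp_Im Suc)
    then show ?case by (simp add: mult_ac)
  qed
next
  case (Suc i)
  have "Mp (Suc (k + i + j)) (\<lambda>z. of_real (Re z) * (of_real (Re z ^ i * Im z ^ j) * g z))"
    by (intro Mp_Re Suc)
  then show ?case by (simp add: mult_ac)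
qed

lemma Mp_poly2: "Mp m (\<lambda>z. of_real (poly2 m c z))"
proof -
  have "Mp m (\<lambda>z. \<Sum>i\<le>m. \<Sum>j\<le>m - i. of_real (Re z ^ i * Im z ^ j) * (\<lambda>_. of_real (c i j)) z)"
  proof (intro Mp_sum finite_atMost)
    fix i j assume "i \<in> {..m}" "j \<in> {..m-i}"
    then have e: "m - i - j + i + j = m" by auto
    show "Mp m (\<lambda>z. of_real (Re z ^ i * Im z ^ j) * (\<lambda>_. of_real (c i j)) z)"
      using Mp_ReIm[OF Mp_const[of "m - i - j" "of_real (c i j)"], of i j] unfolding e .
  qed
  then show ?thesis unfolding poly2_def by (simp add: mult_ac)
qed



lemma sum_roots:
  fixes N :: nat and k :: int
  assumes N: "N > 0" and k: "\<bar>k\<bar> < int N"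
  shows "(\<Sum>l<N. cis (2*pi*real l*real_of_int k/real N)) = (if k = 0 then of_nat N else 0)"
proof -
  define q where "q = cis (2*pi*real_of_int k/real N)"
  have qp: "cis (2*pi*real l*real_of_int k/real N) = q ^ l" for l
    unfolding q_def Complex.DeMoivre by (simp add: mult_ac)
  have qN: "q ^ N = 1"
  proof -
    have "q ^ N = cis (2*pi*real_of_int k)" unfolding q_def Complex.DeMoivre using N by simp
    then show ?thesis by (metis Ints_of_int cis_multiple_2pi)
  qed
  show ?thesis
  proof (cases "k = 0")
    case True then show ?thesis by simp
  next
    case False
    have "q \<noteq> 1"
    proof
      assume "q = 1"
      then have "cos (2*pi*real_of_int k/real N) = 1" unfolding q_def
        by (metis cis.sel(1) one_complex.sel(1))
      then obtain n :: int where n: "2*pi*real_of_int k/real N = real_of_int n * 2 * pi"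
        using cos_one_2pi_int by meson
      then have "real_of_int k = real_of_int n * real N" using N by (simp add: field_simps)
      then have "k = n * int N" by (metis of_int_eq_iff of_int_mult of_int_of_nat_eq)
      with k False show False
        by (cases "n = 0") (auto simp: abs_mult dest: mult_le_cancel_right1[THEN iffD1])
    qed
    then show ?thesis using False by (simp add: qp sum_gp_strict qN)
  qed
qed

lemma rot_sum:
  assumes "Mp n g" "n < N"
  shows "\<exists>K. \<forall>z. norm z = 1 \<longrightarrow> (\<Sum>l<N. g (cis (2*pi*real l/real N) * z)) = of_nat N * K"
proof -
  from assms(1) obtain d where d: "\<And>z. g z = (\<Sum>a\<le>n. \<Sum>b\<le>n-a. d a b * z^a * cnj z^b)"
    unfolding Mp_def by blast
  have N: "N > 0" using assms(2) by simp
  define K where "K = (\<Sum>a\<le>n. if a \<le> n - a then d a a else 0)"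
  have "(\<Sum>l<N. g (cis (2*pi*real l/real N) * z)) = of_nat N * K" if z: "norm z = 1" for z
  proof -
    have pw: "(cis x * z)^a * cnj (cis x * z)^b = (z^a * cnj z^b) * cis (x * (real_of_int (int a - int b)))"
      for x a b
    proof -
      have "(cis x * z)^a * cnj (cis x * z)^b = (z^a * cnj z^b) * (cis x ^ a * cis (-x) ^ b)"
        by (simp add: power_mult_distrib cis_cnj mult_ac)
      also have "cis x ^ a * cis (-x) ^ b = cis (x * (real_of_int (int a - int b)))"
        by (simp add: Complex.DeMoivre cis_mult algebra_simps)
      finally show ?thesis .
    qed
    have "(\<Sum>l<N. g (cis (2*pi*real l/real N) * z))
       = (\<Sum>l<N. \<Sum>a\<le>n. \<Sum>b\<le>n-a. d a b * (z^a * cnj z^b) * cis (2*pi*real l*real_of_int (int a - int b)/real N))"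
      unfolding d
    proof (intro sum.cong refl)
      fix l a b
      have eq: "2*pi*real l/real N * real_of_int (int a - int b) = 2*pi*real l*real_of_int (int a - int b)/real N"
        by simp
      show "d a b * (cis (2*pi*real l/real N) * z)^a * cnj (cis (2*pi*real l/real N) * z)^b =
            d a b * (z^a * cnj z^b) * cis (2*pi*real l*real_of_int (int a - int b)/real N)"
        using pw[of "2*pi*real l/real N" a b] unfolding eq by (simp only: mult.assoc)
    qed
    also have "\<dots> = (\<Sum>a\<le>n. \<Sum>b\<le>n-a. d a b * (z^a * cnj z^b) * (\<Sum>l<N. cis (2*pi*real l*real_of_int (int a - int b)/real N)))"
      by (simp add: sum_distrib_left sum.swap[of _ "{..<N}"])
    also have "\<dots> = (\<Sum>a\<le>n. \<Sum>b\<le>n-a. d a b * (z^a * cnj z^b) * (if a = b then of_nat N else 0))"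
    proof (intro sum.cong refl)
      fix a b assume "a \<in> {..n}" "b \<in> {..n-a}"
      then have "\<bar>int a - int b\<bar> < int N" using assms(2) by auto
      then show "d a b * (z^a * cnj z^b) * (\<Sum>l<N. cis (2*pi*real l*real_of_int (int a - int b)/real N)) =
         d a b * (z^a * cnj z^b) * (if a = b then of_nat N else 0)"
        by (subst sum_roots[OF N]) auto
    qed
    also have "\<dots> = (\<Sum>a\<le>n. of_nat N * (if a \<le> n - a then d a a else 0))"
    proof (rule sum.cong[OF refl])
      fix a assume "a \<in> {..n}"
      have za: "z^a * cnj z^a = 1"
        using complex_norm_square[of z] z by (simp add: power_mult_distrib[symmetric])
      show "(\<Sum>b\<le>n-a. d a b * (z^a * cnj z^b) * (if a = b then of_nat N else 0)) = of_nat N * (if a \<le> n - a then d a a else 0)"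
        by (simp add: if_distrib[of "\<lambda>x. _ * x"] za cong: if_cong)
    qed
    also have "\<dots> = of_nat N * K" by (simp add: K_def sum_distrib_left)
    finally show ?thesis .
  qed
  then show ?thesis by blast
qed



lemma S1_int:
  fixes g :: "complex \<Rightarrow> real"
  assumes g: "continuous_on UNIV g"
  shows "integrable S1_measure g"
    and "(\<integral>z. g z \<partial>S1_measure) = integral {0..2*pi} (\<lambda>t. g (cis t))"
proof -
  have cm: "cis \<in> measurable (lebesgue_on {0..2*pi}) borel"
    by (intro continuous_imp_measurable_on_sets_lebesgue continuous_intros) auto
  have gm: "g \<in> borel_measurable borel" using g by (rule borel_measurable_continuous_onI)
  have cont: "continuous_on {0..2*pi} (\<lambda>t. g (cis t))"
    by (rule continuous_on_compose2[OF g]) (auto intro: continuous_intros)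
  have int: "integrable (lebesgue_on {0..2*pi}) (\<lambda>t. g (cis t))"
    using cont by (rule continuous_imp_integrable_real)
  show "integrable S1_measure g"
    unfolding S1_measure_def using int by (subst integrable_distr_eq[OF cm gm])
  have "(\<integral>z. g z \<partial>S1_measure) = (\<integral>t. g (cis t) \<partial>lebesgue_on {0..2*pi})"
    unfolding S1_measure_def by (rule integral_distr[OF cm gm])
  also have "\<dots> = integral {0..2*pi} (\<lambda>t. g (cis t))"
    by (rule lebesgue_integral_eq_integral[OF int]) auto
  finally show "(\<integral>z. g z \<partial>S1_measure) = integral {0..2*pi} (\<lambda>t. g (cis t))" .
qed

lemma periodic_shift:
  fixes F :: "real \<Rightarrow> real"
  assumes F: "continuous_on UNIV F" and per: "\<And>x. F (x + 2*pi) = F x"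
    and b: "0 \<le> b" "b \<le> 2*pi"
  shows "integral {0..2*pi} (\<lambda>x. F (x + b)) = integral {0..2*pi} F"
proof -
  have I: "F integrable_on {u..v}" for u v
    using F by (intro integrable_continuous_real) (auto intro: continuous_on_subset)
  have "integral {0..2*pi} (\<lambda>x. F (x + b)) = integral {b..2*pi+b} F"
    using integral_shift_real_ivl[where f=F and a=b and b="2*pi+b" and c=b] by simp
  also have "\<dots> = integral {b..2*pi} F + integral {2*pi..2*pi+b} F"
    using b Henstock_Kurzweil_Integration.integral_combine[where f=F and a=b and c="2*pi" and b="2*pi+b", OF _ _ I] by simp
  also have "integral {2*pi..2*pi+b} F = integral {0..b} (\<lambda>x. F (x + 2*pi))"
    using integral_shift_real_ivl[where f=F and a="2*pi" and b="2*pi+b" and c="2*pi"] by simp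
  also have "\<dots> = integral {0..b} F" by (simp add: per)
  also have "integral {b..2*pi} F + integral {0..b} F = integral {0..2*pi} F"
    using b Henstock_Kurzweil_Integration.integral_combine[where f=F and a=0 and c=b and b="2*pi", OF _ _ I] by simp
  finally show ?thesis .
qed

lemma rot_int:
  fixes g :: "complex \<Rightarrow> real"
  assumes g: "continuous_on UNIV g" and b: "0 \<le> b" "b \<le> 2*pi"
  shows "integral {0..2*pi} (\<lambda>t. g (cis b * cis t)) = integral {0..2*pi} (\<lambda>t. g (cis t))"
proof -
  have "integral {0..2*pi} (\<lambda>t. g (cis (t + b))) = integral {0..2*pi} (\<lambda>t. g (cis t))"
  proof (rule periodic_shift[OF _ _ b])
    show "continuous_on UNIV (\<lambda>t. g (cis t))"
      by (rule continuous_on_compose2[OF g]) (auto intro: continuous_intros)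
    show "g (cis (x + 2 * pi)) = g (cis x)" for x
      by (simp add: cis.code)
  qed
  then show ?thesis by (simp add: cis_mult add.commute)
qed



lemma poly2_cont: "continuous_on UNIV (poly2 m c)"
  unfolding poly2_def by (intro continuous_intros)

lemma weighted_moment:
  fixes E :: "complex \<Rightarrow> real"
  assumes E: "continuous_on UNIV E" and N: "m < N"
    and inv: "\<And>l z. E (cis (2*pi*real l/real N) * z) = E z"
  shows "\<exists>Kr. \<forall>E'. continuous_on UNIV E' \<longrightarrow> (\<forall>l z. E' (cis (2*pi*real l/real N) * z) = E' z) \<longrightarrow>
     integral {0..2*pi} (\<lambda>t. E' (cis t) * poly2 m c (cis t)) = Kr * integral {0..2*pi} (\<lambda>t. E' (cis t))"
proof -
  let ?P = "poly2 m c"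
  obtain K where K: "\<And>z. norm z = 1 \<Longrightarrow> (\<Sum>l<N. complex_of_real (?P (cis (2*pi*real l/real N) * z))) = of_nat N * K"
    using rot_sum[OF Mp_poly2 N] by blast
  have KR: "(\<Sum>l<N. ?P (cis (2*pi*real l/real N) * z)) = real N * Re K" if "norm z = 1" for z
    using arg_cong[OF K[OF that], of Re] by (simp add: Re_sum)
  have Npos: "real N > 0" using N by simp
  show ?thesis
  proof (intro exI allI impI)
    fix E' :: "complex \<Rightarrow> real"
    assume E': "continuous_on UNIV E'" and inv': "\<forall>l z. E' (cis (2*pi*real l/real N) * z) = E' z"
    have EP: "continuous_on UNIV (\<lambda>z. E' z * ?P z)"
      by (intro continuous_intros E' poly2_cont[unfolded continuous_on_eq_continuous_at[OF open_UNIV]]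
          | use E' poly2_cont in auto)+
    have intg: "(\<lambda>t. E' (cis t) * ?P (cis (2*pi*real l/real N) * cis t)) integrable_on {0..2*pi}" for l
    proof (rule integrable_continuous_real)
      have "continuous_on UNIV (\<lambda>t. E' (cis t) * ?P (cis (2*pi*real l/real N) * cis t))"
        by (intro continuous_intros continuous_on_compose2[OF E'] continuous_on_compose2[OF poly2_cont]) auto
      then show "continuous_on {0..2*pi} (\<lambda>t. E' (cis t) * ?P (cis (2*pi*real l/real N) * cis t))"
        by (rule continuous_on_subset) auto
    qed
    have "real N * integral {0..2*pi} (\<lambda>t. E' (cis t) * ?P (cis t))
        = (\<Sum>l<N. integral {0..2*pi} (\<lambda>t. E' (cis (2*pi*real l/real N) * cis t) * ?P (cis (2*pi*real l/real N) * cis t)))"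
    proof -
      have "integral {0..2*pi} (\<lambda>t. E' (cis (2*pi*real l/real N) * cis t) * ?P (cis (2*pi*real l/real N) * cis t))
          = integral {0..2*pi} (\<lambda>t. E' (cis t) * ?P (cis t))" if "l \<in> {..<N}" for l
      proof (rule rot_int[OF EP, where b="2*pi*real l/real N"])
        show "0 \<le> 2*pi*real l/real N" by simp
        show "2*pi*real l/real N \<le> 2*pi" using that Npos by (simp add: field_simps)
      qed
      then show ?thesis by simp
    qed
    also have "\<dots> = (\<Sum>l<N. integral {0..2*pi} (\<lambda>t. E' (cis t) * ?P (cis (2*pi*real l/real N) * cis t)))"
      using inv' by simp
    also have "\<dots> = integral {0..2*pi} (\<lambda>t. \<Sum>l<N. E' (cis t) * ?P (cis (2*pi*real l/real N) * cis t))"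
      by (rule integral_sum[symmetric]) (use intg in auto)
    also have "\<dots> = integral {0..2*pi} (\<lambda>t. (real N * Re K) * E' (cis t))"
      by (simp add: sum_distrib_left[symmetric] KR)
    also have "\<dots> = real N * (Re K * integral {0..2*pi} (\<lambda>t. E' (cis t)))"
      by simp
    finally show "integral {0..2*pi} (\<lambda>t. E' (cis t) * ?P (cis t)) = Re K * integral {0..2*pi} (\<lambda>t. E' (cis t))"
      using Npos by simp
  qed
qed



lemma exp_cubic: "1 + x + x^2/2 + x^3/6 \<le> exp (x::real)"
proof -
  obtain t where t: "exp x = (\<Sum>m<4. x ^ m / fact m) + exp t / fact 4 * x ^ 4"
    using Maclaurin_exp_le[of x 4] by blast
  have "(\<Sum>m<4. x ^ m / fact m) = 1 + x + x^2/2 + x^3/6"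
    by (simp add: eval_nat_numeral fact_numeral)
  moreover have "exp t / fact 4 * x ^ 4 \<ge> 0" by simp
  ultimately show ?thesis using t by linarith
qed

lemma has_integral_cos_k:
  assumes "k > 0"
  shows "((\<lambda>x. cos (real k * x)) has_integral 0) {0..2*pi}"
proof -
  have "((\<lambda>x. cos (real k * x)) has_integral (sin (real k * (2*pi))/real k - sin (real k * 0)/real k)) {0..2*pi}"
  proof (rule fundamental_theorem_of_calculus)
    show "((\<lambda>x. sin (real k * x) / real k) has_vector_derivative cos (real k * x)) (at x within {0..2*pi})"
      for x
      using assms unfolding has_vector_derivative_def
      by (intro derivative_eq_intros | force)+
  qed auto
  moreover have "sin (real k * (2*pi)) = 0"
    using sin_2npi[of k] by (simp add: mult_ac)
  ultimately show ?thesis by simp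
qed

lemma cos_pow_integrals:
  assumes "N > 0"
  shows "((\<lambda>x. cos (real N * x)) has_integral 0) {0..2*pi}"
    and "((\<lambda>x. (cos (real N * x))^2) has_integral pi) {0..2*pi}"
    and "((\<lambda>x. (cos (real N * x))^3) has_integral 0) {0..2*pi}"
proof -
  show "((\<lambda>x. cos (real N * x)) has_integral 0) {0..2*pi}" using has_integral_cos_k assms .
  have c2: "(cos (y::real))^2 = 1/2 + (1/2) * cos (2*y)" for y
    by (subst cos_double_cos) (simp add: field_simps)
  have "((\<lambda>x. 1/2 + (1/2) * cos (real (2*N) * x)) has_integral (1/2 * (2*pi - 0) + (1/2) * 0)) {0..2*pi}"
  proof (rule has_integral_add)
    show "((\<lambda>x. 1/2::real) has_integral (1/2 * (2*pi - 0))) {0..2*pi}"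
      using has_integral_const_real[of "1/2::real" 0 "2*pi"] by simp
    show "((\<lambda>x. (1/2) * cos (real (2*N) * x)) has_integral ((1/2) * 0)) {0..2*pi}"
      by (rule has_integral_mult_right, rule has_integral_cos_k) (use assms in auto)
  qed
  then show "((\<lambda>x. (cos (real N * x))^2) has_integral pi) {0..2*pi}"
    by (simp add: c2 mult.assoc)
  have c3: "(cos (y::real))^3 = (3/4) * cos y + (1/4) * cos (3*y)" for y
    by (subst cos_treble_cos) (simp add: field_simps)
  have "((\<lambda>x. (3/4) * cos (real N * x) + (1/4) * cos (real (3*N) * x)) has_integral ((3/4) * 0 + (1/4) * 0)) {0..2*pi}"
    by (intro has_integral_add has_integral_mult_right; rule has_integral_cos_k) (use assms in auto)
  then show "((\<lambda>x. (cos (real N * x))^3) has_integral 0) {0..2*pi}"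
    by (simp add: c3 mult.assoc)
qed



lemma nn_integral_scale_complex:
  fixes f :: "complex \<Rightarrow> ennreal"
  assumes [measurable]: "f \<in> borel_measurable borel" and c: "c > 0"
  shows "(\<integral>\<^sup>+x. f x \<partial>lborel) = ennreal (c^2) * (\<integral>\<^sup>+x. f (c *\<^sub>R x) \<partial>lborel)"
proof -
  have "(\<integral>\<^sup>+x. f x \<partial>lborel) = (\<integral>\<^sup>+x. f x \<partial>density (distr lborel borel (\<lambda>x. 0 + c *\<^sub>R x)) (\<lambda>_. \<bar>c\<bar>^DIM(complex)))"
    using lborel_affine[of c "0::complex"] c by simp
  also have "\<dots> = ennreal (c^2) * (\<integral>\<^sup>+x. f (c *\<^sub>R x) \<partial>lborel)"
    using c by (simp add: nn_integral_density nn_integral_distr nn_integral_cmult)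
  finally show ?thesis .
qed

lemma ball_borel [measurable]: "ball (c::complex) r \<in> sets borel" by simp
lemma normpow_borel [measurable]: "(\<lambda>x::complex. norm x ^ n) \<in> borel_measurable borel"
  by (intro borel_measurable_continuous_onI continuous_intros)

definition J :: "nat \<Rightarrow> real \<Rightarrow> ennreal" where
  "J k r = (\<integral>\<^sup>+x. indicator (ball (0::complex) r) x * ennreal (norm x ^ (2*k)) \<partial>lborel)"

lemma J_scale:
  assumes r: "r > 0"
  shows "J k r = ennreal (r ^ (2*k+2)) * J k 1"
proof -
  have "J k r = ennreal (r^2) * (\<integral>\<^sup>+x. indicator (ball (0::complex) r) (r *\<^sub>R x) * ennreal (norm (r *\<^sub>R x) ^ (2*k)) \<partial>lborel)"
    unfolding J_def by (rule nn_integral_scale_complex[OF _ r]) measurable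
  also have "(\<lambda>x::complex. indicator (ball (0::complex) r) (r *\<^sub>R x) * ennreal (norm (r *\<^sub>R x) ^ (2*k)))
     = (\<lambda>x. ennreal (r^(2*k)) * (indicator (ball 0 1) x * ennreal (norm x ^ (2*k))))"
  proof
    fix x :: complex
    have "r *\<^sub>R x \<in> ball 0 r \<longleftrightarrow> x \<in> ball 0 1" using r by (simp add: abs_of_pos)
    then show "indicator (ball (0::complex) r) (r *\<^sub>R x) * ennreal (norm (r *\<^sub>R x) ^ (2*k))
        = ennreal (r^(2*k)) * (indicator (ball 0 1) x * ennreal (norm x ^ (2*k)))"
      using r by (auto simp: indicator_def abs_of_pos power_mult_distrib ennreal_mult)
  qed
  also have "(\<integral>\<^sup>+x. ennreal (r^(2*k)) * (indicator (ball (0::complex) 1) x * ennreal (norm x ^ (2*k))) \<partial>lborel)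
     = ennreal (r^(2*k)) * J k 1"
    unfolding J_def by (rule nn_integral_cmult) measurable
  finally show ?thesis
    using r by (simp add: mult.assoc[symmetric] ennreal_mult[symmetric] power_add[symmetric] add.commute)
qed

lemma J_le_pi: "J k 1 \<le> ennreal pi"
proof -
  have "J k 1 \<le> (\<integral>\<^sup>+x. indicator (ball (0::complex) 1) x \<partial>lborel)"
    unfolding J_def
    by (intro nn_integral_mono) (auto simp: indicator_def power_le_one)
  also have "\<dots> = ennreal pi" by (simp add: emeasure_ball unit_ball_vol_2)
  finally show ?thesis .
qed

lemma J_split:
  assumes r: "0 < r" "r < 1"
  shows "J k 1 \<le> J k r + ennreal (pi - pi * r^2)"
proof -
  have "J k 1 \<le> (\<integral>\<^sup>+x. indicator (ball (0::complex) r) x * ennreal (norm x ^ (2*k)) + indicator (ball 0 1 - ball 0 r) x \<partial>lborel)"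
    unfolding J_def
  proof (intro nn_integral_mono)
    fix x :: complex
    show "indicator (ball 0 1) x * ennreal (norm x ^ (2*k)) \<le> indicator (ball 0 r) x * ennreal (norm x ^ (2*k)) + indicator (ball 0 1 - ball 0 r) x"
      by (auto simp: indicator_def power_le_one)
  qed
  also have "\<dots> = J k r + emeasure lborel (ball (0::complex) 1 - ball 0 r)"
    unfolding J_def by (subst nn_integral_add) auto
  also have "emeasure lborel (ball (0::complex) 1 - ball 0 r) = emeasure lborel (ball (0::complex) 1) - emeasure lborel (ball (0::complex) r)"
    using r by (intro emeasure_Diff) (auto simp: emeasure_ball)
  also have "\<dots> = ennreal (pi - pi * r^2)"
    using r by (simp add: emeasure_ball unit_ball_vol_2 ennreal_minus mult.commute)
  finally show ?thesis .
qed

lemma J_bound: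
  assumes s: "0 < s" "s < 1"
  shows "enn2real (J k 1) \<le> pi / (real (k+1) * s^k)" and "J k 1 = ennreal (enn2real (J k 1))"
proof -
  define j where "j = enn2real (J k 1)"
  have fin: "J k 1 < \<infinity>" using J_le_pi[of k] by (simp add: le_less_trans)
  then show Jj: "J k 1 = ennreal (enn2real (J k 1))" by simp
  have j0: "j \<ge> 0" unfolding j_def by simp
  define r where "r = sqrt s"
  have r: "0 < r" "r < 1" using s by (auto simp: r_def)
  have r2: "r^2 = s" using s by (simp add: r_def)
  have "r^2 \<le> 1" using r by (simp add: power_le_one)
  then have b: "pi - pi * r^2 \<ge> 0" by simp
  have "ennreal j \<le> ennreal (r^(2*k+2)) * ennreal j + ennreal (pi - pi * r^2)"
    using J_split[OF r, of k] J_scale[of r k] r Jj unfolding j_def by simp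
  also have "\<dots> = ennreal (r^(2*k+2) * j + (pi - pi * r^2))"
  proof -
    have a: "ennreal (r^(2*k+2)) * ennreal j = ennreal (r^(2*k+2) * j)"
      by (rule ennreal_mult[symmetric]) (use r j0 in auto)
    show ?thesis unfolding a by (rule ennreal_plus[symmetric]) (use r j0 b in auto)
  qed
  finally have le1: "j \<le> r^(2*k+2) * j + (pi - pi * r^2)"
    by (rule ennreal_le_iff[THEN iffD1, rotated]) (use r j0 b in auto)
  have e: "2*k+2 = 2*(k+1)" by simp
  have rs: "r^(2*k+2) = s^(k+1)"
    unfolding e power_mult r2 ..
  have main: "j * (1 - s^(k+1)) \<le> pi * (1 - s)"
    using le1 unfolding rs r2 by (simp add: algebra_simps)
  have geo: "1 - s^(k+1) = (1 - s) * (\<Sum>i\<le>k. s^i)"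
    using one_diff_power_eq[of s "Suc k"] unfolding lessThan_Suc_atMost by simp
  have "(\<Sum>i\<le>k. s^i) \<ge> (\<Sum>i\<le>k. s^k)"
    using s by (intro sum_mono power_decreasing) auto
  then have sumge: "(\<Sum>i\<le>k. s^i) \<ge> real (k+1) * s^k" by simp
  have "j * (real (k+1) * s^k) \<le> j * (\<Sum>i\<le>k. s^i)"
    using sumge j0 by (intro mult_left_mono) auto
  also have "j * (\<Sum>i\<le>k. s^i) \<le> pi"
  proof -
    have "(1 - s) * (j * (\<Sum>i\<le>k. s^i)) \<le> (1 - s) * pi"
      using main unfolding geo by (simp add: mult_ac)
    then show ?thesis using s by simp
  qed
  finally have "j * (real (k+1) * s^k) \<le> pi" .
  moreover have "real (k+1) * s^k > 0" using s by simp
  ultimately show "enn2real (J k 1) \<le> pi / (real (k+1) * s^k)"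
    unfolding j_def[symmetric] by (simp add: pos_le_divide_eq)
qed

lemma disk_integral:
  "(\<integral>x. norm x ^ (2*k) \<partial>lebesgue_on (ball (0::complex) 1)) = enn2real (J k 1)"
proof -
  have m: "(\<lambda>x::complex. norm x ^ (2*k)) \<in> borel_measurable (lebesgue_on (ball 0 1))"
    by (intro continuous_imp_measurable_on_sets_lebesgue continuous_intros) auto
  have "(\<integral>x. norm x ^ (2*k) \<partial>lebesgue_on (ball (0::complex) 1))
      = enn2real (\<integral>\<^sup>+x. ennreal (norm x ^ (2*k)) \<partial>lebesgue_on (ball (0::complex) 1))"
    by (rule integral_eq_nn_integral[OF m]) auto
  also have "(\<integral>\<^sup>+x. ennreal (norm x ^ (2*k)) \<partial>lebesgue_on (ball (0::complex) 1))
      = (\<integral>\<^sup>+x. ennreal (norm x ^ (2*k)) * indicator (ball (0::complex) 1) x \<partial>lebesgue)"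
    by (rule nn_integral_restrict_space) auto
  also have "\<dots> = (\<integral>\<^sup>+x. ennreal (norm x ^ (2*k)) * indicator (ball (0::complex) 1) x \<partial>lborel)"
    by (rule nn_integral_completion)
  also have "\<dots> = J k 1" unfolding J_def by (simp add: mult.commute)
  finally show ?thesis .
qed



lemma H1_ok:
  fixes t :: real and N m :: nat
  assumes N: "N = Suc m"
  defines "u \<equiv> \<lambda>z::complex. t * Re (z ^ N)"
  defines "G \<equiv> \<lambda>z::complex. cnj (complex_of_real (t * real N) * z ^ m)"
  shows "H1_with_trace u G u"
proof -
  have uc: "continuous_on UNIV u" unfolding u_def by (intro continuous_intros)
  have Gc: "continuous_on UNIV G" unfolding G_def by (intro continuous_intros)
  have der: "(u has_derivative (\<lambda>h. G x \<bullet> h)) (at x)" for x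
  proof -
    have "((\<lambda>z. z ^ N) has_field_derivative of_nat N * (1 * x ^ (N - Suc 0))) (at x)"
      by (intro DERIV_power DERIV_ident)
    then have "((\<lambda>z. z ^ N) has_derivative (*) (of_nat N * x ^ m)) (at x)"
      by (simp add: has_field_derivative_def N)
    then have "((\<lambda>z. Re (z ^ N)) has_derivative (\<lambda>h. Re ((of_nat N * x ^ m) * h))) (at x)"
      by (rule has_derivative_Re)
    then have "(u has_derivative (\<lambda>h. t * Re ((of_nat N * x ^ m) * h))) (at x)"
      unfolding u_def by (rule has_derivative_mult_right)
    moreover have "(\<lambda>h. t * Re ((of_nat N * x ^ m) * h)) = (\<lambda>h. G x \<bullet> h)"
    proof -
      have r: "Re (cnj x ^ m) = Re (x ^ m)" "Im (cnj x ^ m) = - Im (x ^ m)"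
        by (metis complex_cnj_power cnj.sel)+
      show ?thesis by (auto simp: G_def inner_complex_def algebra_simps r)
    qed
    ultimately show ?thesis by simp
  qed
  show ?thesis
    unfolding H1_with_trace_def
  proof (intro conjI exI[of _ "\<lambda>n. u"] exI[of _ "\<lambda>n. G"])
    show "u \<in> borel_measurable lebesgue"
      using continuous_imp_measurable_on_sets_lebesgue[OF uc] by (simp add: lebesgue_on_UNIV_eq)
    show "G \<in> borel_measurable lebesgue"
      using continuous_imp_measurable_on_sets_lebesgue[OF Gc] by (simp add: lebesgue_on_UNIV_eq)
    show "u \<in> borel_measurable borel" by (rule borel_measurable_continuous_onI[OF uc])
    show "\<forall>n. \<exists>S. open S \<and> cball 0 1 \<subseteq> S \<and> continuous_on S G \<and> (\<forall>x\<in>S. (u has_derivative (\<lambda>h. G x \<bullet> h)) (at x))"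
      using Gc der by (intro allI exI[of _ UNIV]) auto
  qed simp_all
qed

lemma circle_facts:
  fixes t :: real and N m :: nat
  assumes N: "N = Suc m" and t: "0 < t" "t \<le> 2"
  defines "u \<equiv> \<lambda>z::complex. t * Re (z ^ N)"
  shows "\<forall>c. (\<integral>z. poly2 m c z \<partial>S1_measure) = 0 \<longrightarrow> (\<integral>z. exp (u z) * poly2 m c z \<partial>S1_measure) = 0"
    and "S1_mean u = 0"
    and "ln ((1 / (2*pi)) * (\<integral>z. exp (u z - S1_mean u) \<partial>S1_measure)) \<ge> t^2/4 - t^4/16"
proof -
  have uc: "continuous_on UNIV u" unfolding u_def by (intro continuous_intros)
  have Ec: "continuous_on UNIV (\<lambda>z. exp (u z))" unfolding u_def by (intro continuous_intros)
  have ucis: "u (cis x) = t * cos (real N * x)" for x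
    unfolding u_def by (simp add: Complex.DeMoivre)
  have NmN: "m < N" using N by simp
  have Npos: "N > 0" using N by simp
  have inv: "u (cis (2*pi*real l/real N) * z) = u z" for l z
  proof -
    have "cis (2*pi*real l/real N) ^ N = cis (2*pi*real l)"
      unfolding Complex.DeMoivre using Npos by simp
    also have "\<dots> = 1" by (metis Ints_of_nat cis_multiple_2pi)
    finally show ?thesis unfolding u_def by (simp add: power_mult_distrib)
  qed
  show "\<forall>c. (\<integral>z. poly2 m c z \<partial>S1_measure) = 0 \<longrightarrow> (\<integral>z. exp (u z) * poly2 m c z \<partial>S1_measure) = 0"
  proof (intro allI impI)
    fix c
    assume P0: "(\<integral>z. poly2 m c z \<partial>S1_measure) = 0"
    have invE: "\<And>l z. exp (u (cis (2*pi*real l/real N) * z)) = exp (u z)" using inv by simp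
    obtain Kr where Kr: "\<forall>E'. continuous_on UNIV E' \<longrightarrow> (\<forall>l z. E' (cis (2*pi*real l/real N) * z) = E' z) \<longrightarrow>
       integral {0..2*pi} (\<lambda>t. E' (cis t) * poly2 m c (cis t)) = Kr * integral {0..2*pi} (\<lambda>t. E' (cis t))"
      using weighted_moment[OF Ec NmN invE, of c] by blast
    have "integral {0..2*pi} (\<lambda>t. 1 * poly2 m c (cis t)) = Kr * integral {0..2*pi} (\<lambda>t. 1::real)"
      using spec[OF Kr, of "\<lambda>_. 1"] by simp
    moreover have "integral {0..2*pi} (\<lambda>t. poly2 m c (cis t)) = 0"
      using P0 S1_int(2)[OF poly2_cont] by simp
    ultimately have K0: "Kr = 0" by simp
    have "integral {0..2*pi} (\<lambda>t. exp (u (cis t)) * poly2 m c (cis t)) = Kr * integral {0..2*pi} (\<lambda>t. exp (u (cis t)))"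
      using spec[OF Kr, of "\<lambda>z. exp (u z)"] Ec invE by blast
    then have I0: "integral {0..2*pi} (\<lambda>t. exp (u (cis t)) * poly2 m c (cis t)) = 0"
      using K0 by simp
    have EPc: "continuous_on UNIV (\<lambda>z. exp (u z) * poly2 m c z)"
      by (rule continuous_on_mult[OF Ec poly2_cont])
    show "(\<integral>z. exp (u z) * poly2 m c z \<partial>S1_measure) = 0"
      using S1_int(2)[OF EPc] I0 by simp
  qed
  have "(\<integral>z. u z \<partial>S1_measure) = integral {0..2*pi} (\<lambda>x. t * cos (real N * x))"
    using S1_int(2)[OF uc] by (simp add: ucis)
  also have "\<dots> = 0"
    using integral_unique[OF cos_pow_integrals(1)[OF Npos]] by simp
  finally show mean: "S1_mean u = 0" unfolding S1_mean_def by simp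
  have "(\<integral>z. exp (u z - S1_mean u) \<partial>S1_measure) = integral {0..2*pi} (\<lambda>x. exp (t * cos (real N * x)))"
    using S1_int(2)[OF Ec] by (simp add: ucis mean)
  also have "\<dots> \<ge> 2*pi + t^2 * pi / 2"
  proof -
    have I: "((\<lambda>x. 1 + t * cos (real N * x) + t^2/2 * (cos (real N * x))^2 + t^3/6 * (cos (real N * x))^3)
            has_integral (2*pi + t * 0 + t^2/2 * pi + t^3/6 * 0)) {0..2*pi}"
    proof -
      have h0: "((\<lambda>x. 1::real) has_integral 2*pi) {0..2*pi}"
        using has_integral_const_real[of "1::real" 0 "2*pi"] by simp
      show ?thesis
        by (rule has_integral_add[OF has_integral_add[OF has_integral_add[OF h0
              has_integral_mult_right[OF cos_pow_integrals(1)[OF Npos]]]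
              has_integral_mult_right[OF cos_pow_integrals(2)[OF Npos]]]
              has_integral_mult_right[OF cos_pow_integrals(3)[OF Npos]]])
    qed
    have "2*pi + t^2 * pi / 2 = integral {0..2*pi} (\<lambda>x. 1 + t * cos (real N * x) + t^2/2 * (cos (real N * x))^2 + t^3/6 * (cos (real N * x))^3)"
      using integral_unique[OF I] by simp
    also have "\<dots> \<le> integral {0..2*pi} (\<lambda>x. exp (t * cos (real N * x)))"
    proof (rule integral_le)
      show "(\<lambda>x. 1 + t * cos (real N * x) + t^2/2 * (cos (real N * x))^2 + t^3/6 * (cos (real N * x))^3) integrable_on {0..2*pi}"
        using I by blast
      show "(\<lambda>x. exp (t * cos (real N * x))) integrable_on {0..2*pi}"
        by (intro integrable_continuous_real continuous_intros)
      show "1 + t * cos (real N * x) + t^2/2 * (cos (real N * x))^2 + t^3/6 * (cos (real N * x))^3 \<le> exp (t * cos (real N * x))"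
        for x
        using exp_cubic[of "t * cos (real N * x)"] by (simp add: power_mult_distrib)
    qed
    finally show ?thesis .
  qed
  finally have ge: "(1 / (2*pi)) * (\<integral>z. exp (u z - S1_mean u) \<partial>S1_measure) \<ge> 1 + t^2/4"
    by (simp add: field_simps)
  have t2: "t^2/4 \<le> 1"
  proof -
    have "t^2 \<le> 2^2" using t by (intro power_mono) auto
    then show ?thesis by simp
  qed
  have "t^2/4 - t^4/16 = t^2/4 - (t^2/4)^2" by (simp add: power_divide power_mult[symmetric])
  also have "\<dots> \<le> ln (1 + t^2/4)" by (rule ln_one_plus_pos_lower_bound) (use t2 in auto)
  also have "\<dots> \<le> ln ((1 / (2*pi)) * (\<integral>z. exp (u z - S1_mean u) \<partial>S1_measure))"
    by (rule ln_mono[OF ge]) (simp add: add_pos_nonneg)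
  finally show "ln ((1 / (2*pi)) * (\<integral>z. exp (u z - S1_mean u) \<partial>S1_measure)) \<ge> t^2/4 - t^4/16" .
qed



theorem mainTheorem16:
  fixes m :: nat and a :: real
  assumes "a > 0"
    and "\<forall>u G f. H1_with_trace u G f \<and>
           (\<forall>c. (\<integral>z. poly2 m c z \<partial>S1_measure) = 0 \<longrightarrow>
                 (\<integral>z. exp (f z) * poly2 m c z \<partial>S1_measure) = 0) \<longrightarrow>
           a * (\<integral>x. (norm (G x))\<^sup>2 \<partial>(lebesgue_on (ball 0 1)))
             \<ge> ln ((1 / (2*pi)) * (\<integral>z. exp (f z - S1_mean f) \<partial>S1_measure))"
  shows "a \<ge> 1 / (4 * pi * (real m + 1))"
proof (rule ccontr)
  assume "\<not> a \<ge> 1 / (4 * pi * (real m + 1))"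
  then have alt: "a < 1 / (4 * pi * (real m + 1))" by simp
  define N where "N = Suc m"
  define A where "A = a * real N * pi"
  have A0: "A > 0" using assms(1) by (simp add: A_def N_def)
  have A14: "A < 1/4"
  proof -
    have pos: "4 * pi * (real m + 1) > 0" by simp
    have "a * (4 * pi * (real m + 1)) < 1" using alt pos by (simp add: pos_less_divide_eq)
    then show ?thesis unfolding A_def N_def by (simp add: algebra_simps)
  qed
  define \<delta> where "\<delta> = 1/4 - A"
  have d: "0 < \<delta>" "\<delta> < 1/4" using A0 A14 by (auto simp: \<delta>_def)
  define t where "t = sqrt \<delta>"
  have t: "0 < t" "t \<le> 2" "t^2 = \<delta>" using d by (auto simp: t_def real_sqrt_le_iff' intro: order.trans[of _ 1])
  define s where "s = 1 - \<delta> / real (m+1)"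
  have s: "0 < s" "s < 1"
    using d by (auto simp: s_def field_simps)
  define u where "u = (\<lambda>z::complex. t * Re (z ^ N))"
  define G where "G = (\<lambda>z::complex. cnj (complex_of_real (t * real N) * z ^ m))"
  have H1: "H1_with_trace u G u" unfolding u_def G_def by (rule H1_ok) (simp add: N_def)
  note cf = circle_facts[OF N_def t(1,2), folded u_def]
  have main: "a * (\<integral>x. (norm (G x))\<^sup>2 \<partial>(lebesgue_on (ball 0 1)))
             \<ge> ln ((1 / (2*pi)) * (\<integral>z. exp (u z - S1_mean u) \<partial>S1_measure))"
  proof -
    have C1: "\<forall>c. (\<integral>z. poly2 m c z \<partial>S1_measure) = 0 \<longrightarrow> (\<integral>z. exp (u z) * poly2 m c z \<partial>S1_measure) = 0"
      using cf(1) unfolding u_def by simp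
    show ?thesis
      by (rule mp[OF spec[OF spec[OF spec[OF assms(2), of u], of G], of u]]) (use H1 C1 in simp)
  qed
  have nG: "(norm (G x))\<^sup>2 = (t * real N)^2 * norm x ^ (2*m)" for x
    unfolding G_def by (simp add: norm_mult norm_power power_mult_distrib power_mult[symmetric] mult.commute)
  have "(\<integral>x. (norm (G x))\<^sup>2 \<partial>(lebesgue_on (ball 0 1))) = (t * real N)^2 * enn2real (J m 1)"
    unfolding nG by (simp add: disk_integral)
  also have "\<dots> \<le> (t * real N)^2 * (pi / (real (m+1) * s^m))"
    by (intro mult_left_mono J_bound(1)[OF s]) auto
  also have "\<dots> = \<delta> * real N * pi / s^m"
  proof -
    have e: "(t * real N)^2 = \<delta> * (real N * real N)" using t(3) by (simp add: power_mult_distrib power2_eq_square)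
    have e2: "real (m+1) = real N" by (simp add: N_def)
    have Np: "real N > 0" by (simp add: N_def)
    show ?thesis unfolding e e2 using s Np by (simp add: field_simps)
  qed
  finally have Gle: "(\<integral>x. (norm (G x))\<^sup>2 \<partial>(lebesgue_on (ball 0 1))) \<le> \<delta> * real N * pi / s^m" .
  have "t^2/4 - t^4/16 \<le> a * (\<delta> * real N * pi / s^m)"
  proof -
    have C3: "t^2/4 - t^4/16 \<le> ln ((1 / (2*pi)) * (\<integral>z. exp (u z - S1_mean u) \<partial>S1_measure))"
      using cf(3) unfolding u_def by simp
    show ?thesis using C3 main mult_left_mono[OF Gle less_imp_le[OF assms(1)]] by linarith
  qed
  also have "\<dots> = \<delta> * A / s^m" by (simp add: A_def)
  finally have F: "t^2/4 - t^4/16 \<le> \<delta> * A / s^m" .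
  have "(t^2)^2 = t^4" by (simp add: power_mult[symmetric])
  then have t4: "t^4 = \<delta>^2" using t(3) by simp
  have "\<delta>/4 - \<delta>^2/16 \<le> \<delta> * A / s^m" using F unfolding t4 t(3) .
  then have h: "\<delta> * (1/4 - \<delta>/16) \<le> \<delta> * (A / s^m)" by (simp add: algebra_simps power2_eq_square)
  have "1/4 - \<delta>/16 \<le> A / s^m" using mult_left_le_imp_le[OF h] d by simp
  then have key: "s^m * (1/4 - \<delta>/16) \<le> A" using s by (simp add: field_simps)
  have bern: "1 + real m * (- (\<delta> / real (m+1))) \<le> s^m"
    unfolding s_def using Bernoulli_inequality[of "- (\<delta> / real (m+1))" m] d
    by (simp add: field_simps)
  have "1 - \<delta> \<le> 1 + real m * (- (\<delta> / real (m+1)))"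
    using d by (simp add: field_simps)
  with bern have sm: "1 - \<delta> \<le> s^m" by linarith
  have "(1 - \<delta>) * (1/4 - \<delta>/16) \<le> s^m * (1/4 - \<delta>/16)"
    using sm d by (intro mult_right_mono) auto
  with key have "(1 - \<delta>) * (1/4 - \<delta>/16) \<le> A" by linarith
  moreover have "(1 - \<delta>) * (1/4 - \<delta>/16) = 1/4 - 5*\<delta>/16 + \<delta>^2/16"
    by (simp add: power2_eq_square field_simps)
  moreover have "\<delta>^2 \<ge> 0" by simp
  moreover have "A = 1/4 - \<delta>" by (simp add: \<delta>_def)
  ultimately show False using d by linarith
qed


end
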